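(* Let $n$ and $m$ be integers with $n\geq 5$ and $m\geq 5$. For each $G\in T_{n,m}$ whose terminals $s$ and $t$ are true twins and which has at least one $3$-irrelevant edge, there exists $H\in T_{n,m}^*$ that is $3$-stronger than $G$.
   Context: All graphs are finite, simple and undirected. A two-terminal graph is a graph $G$ together with two distinguished vertices $s,t$ (the terminals). $T_{n,m}$ denotes the set of all pairwise nonisomorphic (with isomorphisms preserving the set of terminals) two-terminal graphs with $n$ vertices and $m$ edges. Two vertices $u,v$ are true twins if $N[u]=N[v]$ (closed neighborhoods). For a positive integer $d$, a $d$-pathset of a two-terminal graph $G$ is a spanning subgraph of $G$ containing a path of length (number of edges) at most $d$ joining $s$ and $t$; $N_i^d(G)$ is the number of $d$-pathsets of $G$ with exactly $i$ edges. An edge $e$ of $G$ is $d$-irrelevant if for every $d$-pathset $H$ of $G$ containing $e$, $H-e$ is also a $d$-pathset. $T_{n,m}^*$ is the set of graphs in $T_{n,m}$ with no $3$-irrelevant edges whose terminals are true twins. For $G,H\in T_{n,m}$, $H$ is $d$-stronger than $G$ if $N_i^d(H)\geq N_i^d(G)$ for every $i\in\{1,\ldots,m\}$ and $N_j^d(H)>N_j^d(G)$ for some $j\in\{1,\ldots,m\}$. *)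

theory Defs
  imports Main
begin

definition tt_graph :: "'a set \<Rightarrow> 'a set set \<Rightarrow> 'a \<Rightarrow> 'a \<Rightarrow> bool" where
  "tt_graph V E s t \<longleftrightarrow> finite V \<and> (\<forall>e\<in>E. \<exists>u v. e = {u, v} \<and> u \<noteq> v \<and> u \<in> V \<and> v \<in> V)
     \<and> s \<in> V \<and> t \<in> V \<and> s \<noteq> t"

definition closed_nbhd :: "'a set \<Rightarrow> 'a set set \<Rightarrow> 'a \<Rightarrow> 'a set" where
  "closed_nbhd V E v = insert v {u \<in> V. {u, v} \<in> E}"

definition true_twins :: "'a set \<Rightarrow> 'a set set \<Rightarrow> 'a \<Rightarrow> 'a \<Rightarrow> bool" where
  "true_twins V E u v \<longleftrightarrow> closed_nbhd V E u = closed_nbhd V E v"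

definition has_short_path :: "'a set set \<Rightarrow> 'a \<Rightarrow> 'a \<Rightarrow> nat \<Rightarrow> bool" where
  "has_short_path F s t d \<longleftrightarrow> (\<exists>ps. ps \<noteq> [] \<and> hd ps = s \<and> last ps = t \<and> distinct ps
      \<and> length ps - 1 \<le> d \<and> (\<forall>i. Suc i < length ps \<longrightarrow> {ps ! i, ps ! Suc i} \<in> F))"

text \<open>A d-pathset of (V,E,s,t) is a spanning subgraph, identified with its edge set F \<subseteq> E,
  containing an s-t path of length at most d.\<close>
definition is_pathset :: "nat \<Rightarrow> 'a set set \<Rightarrow> 'a \<Rightarrow> 'a \<Rightarrow> 'a set set \<Rightarrow> bool" where
  "is_pathset d E s t F \<longleftrightarrow> F \<subseteq> E \<and> has_short_path F s t d"

definition N_count :: "nat \<Rightarrow> 'a set set \<Rightarrow> 'a \<Rightarrow> 'a \<Rightarrow> nat \<Rightarrow> nat" where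
  "N_count d E s t i = card {F. is_pathset d E s t F \<and> card F = i}"

definition irrelevant_edge :: "nat \<Rightarrow> 'a set set \<Rightarrow> 'a \<Rightarrow> 'a \<Rightarrow> 'a set \<Rightarrow> bool" where
  "irrelevant_edge d E s t e \<longleftrightarrow> e \<in> E \<and>
     (\<forall>F. is_pathset d E s t F \<and> e \<in> F \<longrightarrow> is_pathset d E s t (F - {e}))"

definition stronger :: "nat \<Rightarrow> nat \<Rightarrow> 'a set set \<Rightarrow> 'a \<Rightarrow> 'a \<Rightarrow> 'a set set \<Rightarrow> 'a \<Rightarrow> 'a \<Rightarrow> bool" where
  "stronger d m E2 s2 t2 E1 s1 t1 \<longleftrightarrow>
     (\<forall>i\<in>{1..m}. N_count d E2 s2 t2 i \<ge> N_count d E1 s1 t1 i) \<and>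
     (\<exists>j\<in>{1..m}. N_count d E2 s2 t2 j > N_count d E1 s1 t1 j)"

end

theory Submission
  imports Defs
begin

definition W :: "'a set set \<Rightarrow> 'a \<Rightarrow> 'a \<Rightarrow> bool" where
  "W F s t \<longleftrightarrow> {s,t} \<in> F \<or> (\<exists>x. {s,x} \<in> F \<and> {x,t} \<in> F)
     \<or> (\<exists>x y. {s,x} \<in> F \<and> {x,y} \<in> F \<and> {y,t} \<in> F)"

definition proper :: "'a set set \<Rightarrow> bool" where
  "proper F \<longleftrightarrow> (\<forall>e\<in>F. \<exists>u v. e = {u, v} \<and> u \<noteq> v)"

lemma proper_neq: "proper F \<Longrightarrow> {a,b} \<in> F \<Longrightarrow> a \<noteq> b"
  unfolding proper_def by (metis doubleton_eq_iff insert_absorb2)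

lemma list4: "xs \<noteq> [] \<Longrightarrow> length xs \<le> 4 \<Longrightarrow> (\<exists>a. xs=[a]) \<or> (\<exists>a b. xs=[a,b]) \<or> (\<exists>a b c. xs=[a,b,c]) \<or> (\<exists>a b c d. xs=[a,b,c,d])"
  apply (cases xs, simp)
  subgoal for a l1 apply (cases l1, simp)
    subgoal for b l2 apply (cases l2, simp)
      subgoal for c l3 apply (cases l3, simp)
        subgoal for d l4 by (cases l4, auto)
        done
      done
    done
  done

lemma hsp_W:
  assumes "proper F" "s \<noteq> t"
  shows "has_short_path F s t 3 \<longleftrightarrow> W F s t"
proof
  assume "has_short_path F s t 3"
  then obtain ps where ps: "ps \<noteq> []" "hd ps = s" "last ps = t" "distinct ps" "length ps - 1 \<le> 3"
     "\<forall>i. Suc i < length ps \<longrightarrow> {ps ! i, ps ! Suc i} \<in> F"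
    unfolding has_short_path_def by blast
  have "length ps \<le> 4" using ps(5) by simp
  from list4[OF ps(1) this] show "W F s t"
  proof (elim disjE exE)
    fix a assume "ps = [a]" thus ?thesis using ps assms by simp
  next
    fix a b assume "ps = [a,b]" thus ?thesis using ps(2,3) ps(6)[rule_format, of 0] unfolding W_def by simp
  next
    fix a b c assume "ps = [a,b,c]" thus ?thesis using ps(2,3) ps(6)[rule_format, of 0] ps(6)[rule_format, of 1] unfolding W_def by auto
  next
    fix a b c d assume "ps = [a,b,c,d]" thus ?thesis using ps(2,3) ps(6)[rule_format, of 0] ps(6)[rule_format, of 1] ps(6)[rule_format, of 2] unfolding W_def by auto
  qed
next
  assume w: "W F s t"
  have c1: "has_short_path F s t 3" if "{s,t} \<in> F"
    unfolding has_short_path_def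
    apply (rule exI[of _ "[s,t]"]) using that assms by (auto simp: less_Suc_eq)
  have c2: "has_short_path F s t 3" if "{s,x} \<in> F" "{x,t} \<in> F" for x
  proof -
    have "s \<noteq> x" "x \<noteq> t" using proper_neq[OF assms(1)] that by auto
    thus ?thesis unfolding has_short_path_def
      apply (intro exI[of _ "[s,x,t]"]) using that assms by (auto simp: less_Suc_eq nth_Cons split: nat.splits)
  qed
  have c3: "has_short_path F s t 3" if "{s,x} \<in> F" "{x,y} \<in> F" "{y,t} \<in> F" for x y
  proof (cases "x = t \<or> y = s")
    case True thus ?thesis using c1 that by (auto simp: insert_commute)
  next
    case False
    have "s \<noteq> x" "x \<noteq> y" "y \<noteq> t" using proper_neq[OF assms(1)] that by auto
    thus ?thesis unfolding has_short_path_def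
      apply (intro exI[of _ "[s,x,y,t]"]) using that assms False by (auto simp: less_Suc_eq nth_Cons split: nat.splits)
  qed
  show "has_short_path F s t 3" using w c1 c2 c3 unfolding W_def by blast
qed


lemma W_mono: "W F s t \<Longrightarrow> F \<subseteq> G \<Longrightarrow> W G s t"
  unfolding W_def by blast

definition TW :: "'a set set \<Rightarrow> 'a \<Rightarrow> 'a \<Rightarrow> bool" where
  "TW E s t \<longleftrightarrow> {s,t} \<in> E \<and> (\<forall>x. x \<noteq> s \<longrightarrow> x \<noteq> t \<longrightarrow> ({s,x} \<in> E \<longleftrightarrow> {t,x} \<in> E))"

definition AA :: "'a set set \<Rightarrow> 'a \<Rightarrow> 'a \<Rightarrow> 'a set" where
  "AA E s t = {x. {s,x} \<in> E \<and> x \<noteq> t}"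

definition Irr :: "'a set set \<Rightarrow> 'a \<Rightarrow> 'a \<Rightarrow> 'a set set" where
  "Irr E s t = {e \<in> E. s \<notin> e \<and> t \<notin> e \<and> \<not> e \<subseteq> AA E s t}"

definition Nw :: "'a set set \<Rightarrow> 'a \<Rightarrow> 'a \<Rightarrow> nat \<Rightarrow> nat" where
  "Nw E s t i = card {F. F \<subseteq> E \<and> W F s t \<and> card F = i}"

lemma tt_proper: "tt_graph V E s t \<Longrightarrow> proper E"
  unfolding tt_graph_def proper_def by blast

lemma tt_edge: assumes "tt_graph V E s t" "{a,b} \<in> E" shows "a \<in> V \<and> b \<in> V \<and> a \<noteq> b"
proof -
  obtain u v where uv: "{a,b} = {u,v}" "u \<noteq> v" "u \<in> V" "v \<in> V" using assms unfolding tt_graph_def by blast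
  thus ?thesis by (auto simp: doubleton_eq_iff)
qed

lemma tt_finite: "tt_graph V E s t \<Longrightarrow> finite E"
proof -
  assume a: "tt_graph V E s t"
  have "e \<subseteq> V" if eE: "e \<in> E" for e
  proof -
    have "\<forall>e\<in>E. \<exists>u v. e = {u, v} \<and> u \<noteq> v \<and> u \<in> V \<and> v \<in> V" using a unfolding tt_graph_def by simp
    then obtain u v where "e = {u,v} \<and> u \<noteq> v \<and> u \<in> V \<and> v \<in> V" using eE by meson
    thus ?thesis by auto
  qed
  hence "E \<subseteq> Pow V" by blast
  moreover have "finite V" using a unfolding tt_graph_def by simp
  ultimately show ?thesis using finite_subset by auto
qed

lemma twin_TW: assumes "tt_graph V E s t" "true_twins V E s t" shows "TW E s t"
proof -
  have st: "s \<noteq> t" using assms(1) unfolding tt_graph_def by blast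
  have eq: "closed_nbhd V E s = closed_nbhd V E t" using assms(2) unfolding true_twins_def .
  have "t \<in> closed_nbhd V E s" using eq unfolding closed_nbhd_def by blast
  hence "{s,t} \<in> E" using st unfolding closed_nbhd_def by (auto simp: insert_commute)
  moreover have "({s,x} \<in> E \<longleftrightarrow> {t,x} \<in> E)" if "x \<noteq> s" "x \<noteq> t" for x
  proof
    assume "{s,x} \<in> E"
    hence "x \<in> closed_nbhd V E s" using tt_edge[OF assms(1)] unfolding closed_nbhd_def by (auto simp: insert_commute)
    hence "x \<in> closed_nbhd V E t" using eq by simp
    thus "{t,x} \<in> E" using that unfolding closed_nbhd_def by (auto simp: insert_commute)
  next
    assume "{t,x} \<in> E"
    hence "x \<in> closed_nbhd V E t" using tt_edge[OF assms(1)] unfolding closed_nbhd_def by (auto simp: insert_commute)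
    hence "x \<in> closed_nbhd V E s" using eq by simp
    thus "{s,x} \<in> E" using that unfolding closed_nbhd_def by (auto simp: insert_commute)
  qed
  ultimately show ?thesis unfolding TW_def by blast
qed

lemma TW_twin: assumes "tt_graph V E s t" "TW E s t" shows "true_twins V E s t"
proof -
  have st: "s \<noteq> t" "s \<in> V" "t \<in> V" using assms(1) unfolding tt_graph_def by blast+
  have "x \<in> closed_nbhd V E s \<longleftrightarrow> x \<in> closed_nbhd V E t" for x
  proof (cases "x = s \<or> x = t")
    case True thus ?thesis using assms(2) st unfolding TW_def closed_nbhd_def by (auto simp: insert_commute)
  next
    case False thus ?thesis using assms(2) unfolding TW_def closed_nbhd_def by (auto simp: insert_commute)
  qed
  thus ?thesis unfolding true_twins_def by blast
qed

lemma N_Nw: assumes "tt_graph V E s t" shows "N_count 3 E s t i = Nw E s t i"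
proof -
  have "is_pathset 3 E s t F \<longleftrightarrow> F \<subseteq> E \<and> W F s t" for F
  proof -
    have "F \<subseteq> E \<Longrightarrow> proper F" using tt_proper[OF assms] unfolding proper_def by blast
    moreover have "s \<noteq> t" using assms unfolding tt_graph_def by blast
    ultimately show ?thesis unfolding is_pathset_def using hsp_W[of F s t] by auto
  qed
  thus ?thesis unfolding N_count_def Nw_def by simp
qed

lemma irr_W:
  assumes "F \<subseteq> E" "TW E s t" "e \<in> Irr E s t" "W F s t"
  shows "W (F - {e}) s t"
proof -
  have e: "s \<notin> e" "t \<notin> e" "\<not> e \<subseteq> AA E s t" using assms(3) unfolding Irr_def by auto
  have no: False if "{s,x} \<in> E" "{y,t} \<in> E" "{x,y} = e" for x y
  proof -
    have "x \<noteq> s" "x \<noteq> t" "y \<noteq> s" "y \<noteq> t" using e that(3) by auto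
    hence "x \<in> AA E s t" "y \<in> AA E s t" using that assms(2) unfolding AA_def TW_def by (auto simp: insert_commute)
    thus False using e that(3) by auto
  qed
  show ?thesis using assms(4) e no assms(1) unfolding W_def by blast
qed

lemma W_uv:
  assumes "W Z s t" "u \<noteq> s" "u \<noteq> t" "v \<noteq> s" "v \<noteq> t"
  shows "W (Z - {{u,v}}) s t \<or> ({s,u} \<in> Z \<and> {v,t} \<in> Z) \<or> ({s,v} \<in> Z \<and> {u,t} \<in> Z)"
  using assms unfolding W_def by (auto simp: doubleton_eq_iff)

lemma relevant:
  assumes "tt_graph V E s t" "TW E s t" "irrelevant_edge 3 E s t e"
  shows "e \<in> Irr E s t"
proof (rule ccontr)
  assume ne: "e \<notin> Irr E s t"
  have eE: "e \<in> E" using assms(3) unfolding irrelevant_edge_def by blast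
  have pr: "proper E" using tt_proper[OF assms(1)] .
  have st: "s \<noteq> t" using assms(1) unfolding tt_graph_def by blast
  have ps: "is_pathset 3 E s t F \<longleftrightarrow> F \<subseteq> E \<and> W F s t" for F
  proof -
    have "F \<subseteq> E \<Longrightarrow> proper F" using pr unfolding proper_def by blast
    thus ?thesis unfolding is_pathset_def using hsp_W[of F s t] st by auto
  qed
  have irr: "\<And>F. F \<subseteq> E \<Longrightarrow> W F s t \<Longrightarrow> e \<in> F \<Longrightarrow> W (F - {e}) s t"
    using assms(3) unfolding irrelevant_edge_def ps by blast
  obtain a b where ab: "e = {a,b}" "a \<noteq> b" using pr eE unfolding proper_def by blast
  have stE: "{s,t} \<in> E" using assms(2) unfolding TW_def by blast
  show False
  proof (cases "s \<in> e \<or> t \<in> e")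
    case True
    show False
    proof (cases "e = {s,t}")
      case True
      have "W {{s,t}} s t" unfolding W_def by blast
      hence "W ({{s,t}} - {e}) s t" using irr[of "{{s,t}}"] stE True by auto
      thus False using True unfolding W_def by auto
    next
      case False
      obtain x where ex: "e = {s,x} \<or> e = {t,x}" "x \<noteq> s" "x \<noteq> t"
      proof (cases "a = s")
        case as: True
        hence "b \<noteq> t" using False ab by auto
        thus ?thesis using that[of b] as ab by auto
      next
        case as: False
        show ?thesis
        proof (cases "b = s")
          case bs: True
          hence "a \<noteq> t" using False ab by (auto simp: insert_commute)
          thus ?thesis using that[of a] bs ab by (auto simp: insert_commute)
        next
          case bs: False
          hence "a = t \<or> b = t" using as \<open>s \<in> e \<or> t \<in> e\<close> ab by auto
          thus ?thesis
          proof
            assume "a = t" thus ?thesis using that[of b] ab bs by auto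
          next
            assume "b = t" thus ?thesis using that[of a] ab as by (auto simp: insert_commute)
          qed
        qed
      qed
      have xE: "{s,x} \<in> E" "{x,t} \<in> E" using ex eE assms(2) unfolding TW_def by (auto simp: insert_commute)
      have "W {{s,x},{x,t}} s t" unfolding W_def by blast
      moreover have "e \<in> {{s,x},{x,t}}" using ex(1) by (auto simp: insert_commute)
      ultimately have w: "W ({{s,x},{x,t}} - {e}) s t" using irr[of "{{s,x},{x,t}}"] xE by blast
      have "{s,x} \<noteq> {x,t}" using ex st by (auto simp: doubleton_eq_iff)
      show False
      proof (cases "e = {s,x}")
        case True
        hence "{{s,x},{x,t}} - {e} = {{x,t}}" using \<open>{s,x} \<noteq> {x,t}\<close> by auto
        thus False using w ex st unfolding W_def by (auto simp: doubleton_eq_iff)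
      next
        case False
        hence "e = {x,t}" using ex(1) by (auto simp: insert_commute)
        hence "{{s,x},{x,t}} - {e} = {{s,x}}" using \<open>{s,x} \<noteq> {x,t}\<close> by auto
        thus False using w ex st unfolding W_def by (auto simp: doubleton_eq_iff)
      qed
    qed
  next
    case False
    hence "e \<subseteq> AA E s t" using ne eE unfolding Irr_def by blast
    hence xy: "{s,a} \<in> E" "{s,b} \<in> E" "a \<noteq> t" "b \<noteq> t" using ab unfolding AA_def by auto
    have "a \<noteq> s" "b \<noteq> s" using proper_neq[OF pr] xy by auto
    hence bt: "{b,t} \<in> E" using xy assms(2) unfolding TW_def by (auto simp: insert_commute)
    have "W {{s,a},{a,b},{b,t}} s t" unfolding W_def by blast
    hence "W ({{s,a},{a,b},{b,t}} - {e}) s t" using irr[of "{{s,a},{a,b},{b,t}}"] xy bt eE ab by auto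
    thus False using ab \<open>a \<noteq> s\<close> \<open>b \<noteq> s\<close> xy st unfolding W_def by (auto simp: doubleton_eq_iff)
  qed
qed


lemma Nw_fin: "finite E' \<Longrightarrow> finite {F. F \<subseteq> E' \<and> W F s t \<and> card F = i}"
  by (rule finite_subset[of _ "Pow E'"]) auto

lemma stronger_inj:
  fixes \<Phi> :: "'a set set \<Rightarrow> 'a set set"
  assumes fin: "finite E'"
    and inj: "inj_on \<Phi> {F. F \<subseteq> E \<and> W F s t}"
    and maps: "\<And>F. F \<subseteq> E \<Longrightarrow> W F s t \<Longrightarrow> \<Phi> F \<subseteq> E' \<and> W (\<Phi> F) s t \<and> card (\<Phi> F) = card F"
  shows "Nw E s t i \<le> Nw E' s t i"
proof -
  let ?P = "{F. F \<subseteq> E \<and> W F s t \<and> card F = i}"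
  let ?Q = "{F. F \<subseteq> E' \<and> W F s t \<and> card F = i}"
  have im: "\<Phi> ` ?P \<subseteq> ?Q" using maps by auto
  have ij: "inj_on \<Phi> ?P" using inj by (rule inj_on_subset) auto
  show ?thesis unfolding Nw_def using card_inj_on_le[OF ij im Nw_fin[OF fin]] .
qed

lemma stronger_strict:
  fixes \<Phi> :: "'a set set \<Rightarrow> 'a set set"
  assumes fin: "finite E'"
    and inj: "inj_on \<Phi> {F. F \<subseteq> E \<and> W F s t}"
    and maps: "\<And>F. F \<subseteq> E \<Longrightarrow> W F s t \<Longrightarrow> \<Phi> F \<subseteq> E' \<and> W (\<Phi> F) s t \<and> card (\<Phi> F) = card F"
    and F0: "F0 \<subseteq> E'" "W F0 s t" "\<And>F. F \<subseteq> E \<Longrightarrow> W F s t \<Longrightarrow> \<Phi> F \<noteq> F0"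
  shows "Nw E s t (card F0) < Nw E' s t (card F0)"
proof -
  let ?i = "card F0"
  let ?P = "{F. F \<subseteq> E \<and> W F s t \<and> card F = ?i}"
  let ?Q = "{F. F \<subseteq> E' \<and> W F s t \<and> card F = ?i}"
  have im1: "\<Phi> ` ?P \<subseteq> ?Q" using maps by auto
  have "F0 \<in> ?Q" using F0 by blast
  moreover have "F0 \<notin> \<Phi> ` ?P" using F0(3) by blast
  ultimately have im: "\<Phi> ` ?P \<subset> ?Q" using im1 by blast
  have ij: "inj_on \<Phi> ?P" using inj by (rule inj_on_subset) auto
  have "card (\<Phi> ` ?P) < card ?Q" using psubset_card_mono[OF Nw_fin[OF fin] im] .
  thus ?thesis unfolding Nw_def using card_image[OF ij] by simp
qed

lemma image_move:
  assumes fin: "finite E'" and inj: "inj_on \<phi> E" and im: "\<phi> ` E \<subseteq> E'"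
    and pres: "\<And>F. F \<subseteq> E \<Longrightarrow> W F s t \<Longrightarrow> W (\<phi> ` F) s t"
    and F1: "F1 \<subseteq> E" "\<not> W F1 s t" "W (\<phi> ` F1) s t"
  shows "(\<forall>i. Nw E s t i \<le> Nw E' s t i) \<and> Nw E s t (card F1) < Nw E' s t (card F1)"
proof -
  have inj2: "inj_on (image \<phi>) {F. F \<subseteq> E \<and> W F s t}"
    using inj_on_image_Pow[OF inj] by (rule inj_on_subset) auto
  have maps: "\<And>F. F \<subseteq> E \<Longrightarrow> W F s t \<Longrightarrow> \<phi> ` F \<subseteq> E' \<and> W (\<phi> ` F) s t \<and> card (\<phi> ` F) = card F"
  proof -
    fix F assume "F \<subseteq> E" "W F s t"
    thus "\<phi> ` F \<subseteq> E' \<and> W (\<phi> ` F) s t \<and> card (\<phi> ` F) = card F"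
      using im pres card_image[OF inj_on_subset[OF inj]] by blast
  qed
  have ne: "\<phi> ` F \<noteq> \<phi> ` F1" if "F \<subseteq> E" "W F s t" for F
  proof
    assume "\<phi> ` F = \<phi> ` F1"
    hence "F = F1" using inj_onD[OF inj_on_image_Pow[OF inj]] that F1 by blast
    thus False using that F1 by blast
  qed
  have c: "card (\<phi> ` F1) = card F1" using card_image[OF inj_on_subset[OF inj F1(1)]] .
  show ?thesis using stronger_inj[OF fin inj2 maps] stronger_strict[OF fin inj2 maps _ F1(3) ne] F1(1) im c
    by (metis image_mono order_trans)
qed

lemma W3: "W {{s,x},{x,y},{y,t}} s t"
  unfolding W_def by (rule disjI2, rule disjI2, rule exI[of _ x], rule exI[of _ y], simp)

lemma W2: "W {{s,x},{x,t}} s t"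
  unfolding W_def by (rule disjI2, rule disjI1, rule exI[of _ x], simp)

lemma tt_sub: "tt_graph V E s t \<Longrightarrow> E' \<subseteq> E \<Longrightarrow> tt_graph V E' s t"
  unfolding tt_graph_def by blast

lemma tt_ins: assumes "tt_graph V E s t" "a \<in> V" "b \<in> V" "a \<noteq> b" shows "tt_graph V (insert {a,b} E) s t"
proof -
  have "\<forall>e\<in>E. \<exists>u v. e = {u, v} \<and> u \<noteq> v \<and> u \<in> V \<and> v \<in> V" using assms(1) unfolding tt_graph_def by simp
  hence "\<forall>e\<in>insert {a,b} E. \<exists>u v. e = {u, v} \<and> u \<noteq> v \<and> u \<in> V \<and> v \<in> V" using assms(2-4) by blast
  thus ?thesis using assms(1) unfolding tt_graph_def by simp
qed

lemma notW2: "x \<noteq> y \<Longrightarrow> x \<noteq> s \<Longrightarrow> x \<noteq> t \<Longrightarrow> y \<noteq> s \<Longrightarrow> y \<noteq> t \<Longrightarrow> s \<noteq> t \<Longrightarrow> \<not> W {{s,x},{y,t}} s t"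
  unfolding W_def by (auto simp: doubleton_eq_iff)

lemma notW_nos: "\<forall>z\<in>F. s \<notin> z \<Longrightarrow> \<not> W F s t"
  unfolding W_def by auto

lemma TW_same:
  assumes "TW E s t" "\<And>z. s \<in> z \<or> t \<in> z \<Longrightarrow> z \<in> E' \<longleftrightarrow> z \<in> E"
  shows "TW E' s t" "AA E' s t = AA E s t"
proof -
  have "{s,x} \<in> E' \<longleftrightarrow> {s,x} \<in> E" "{t,x} \<in> E' \<longleftrightarrow> {t,x} \<in> E" for x using assms(2) by auto
  thus "TW E' s t" "AA E' s t = AA E s t" using assms(1) unfolding TW_def AA_def by auto
qed

lemma AA_facts: assumes "tt_graph V E s t" "TW E s t" "x \<in> AA E s t"
  shows "x \<noteq> s" "x \<noteq> t" "x \<in> V" "{s,x} \<in> E" "{t,x} \<in> E" "{x,t} \<in> E"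
proof -
  show sx: "{s,x} \<in> E" "x \<noteq> t" using assms(3) unfolding AA_def by auto
  show "x \<noteq> s" "x \<in> V" using tt_edge[OF assms(1) sx(1)] by auto
  thus "{t,x} \<in> E" "{x,t} \<in> E" using assms(2) sx unfolding TW_def by (auto simp: insert_commute)
qed

lemma fin_Irr: "tt_graph V E s t \<Longrightarrow> finite (Irr E s t)"
  using tt_finite[of V E s t] unfolding Irr_def by auto

definition good :: "'a set \<Rightarrow> 'a \<Rightarrow> 'a \<Rightarrow> nat \<Rightarrow> 'a set set \<Rightarrow> 'a set set \<Rightarrow> bool" where
  "good V s t m E E' \<longleftrightarrow> tt_graph V E' s t \<and> TW E' s t \<and> card E' = m \<and> card (Irr E' s t) < card (Irr E s t)
     \<and> (\<forall>i. Nw E s t i \<le> Nw E' s t i) \<and> (\<exists>j\<in>{1..m}. Nw E s t j < Nw E' s t j)"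

lemma M1:
  assumes tt: "tt_graph V E s t" and tw: "TW E s t" and cE: "card E = m" and m5: "m \<ge> 5"
    and e: "e \<in> Irr E s t" and x: "x \<in> AA E s t" and y: "y \<in> AA E s t" and xy: "x \<noteq> y" "{x,y} \<notin> E"
  shows "\<exists>E'. good V s t m E E'"
proof -
  note xf = AA_facts[OF tt tw x] and yf = AA_facts[OF tt tw y]
  have es: "s \<notin> e" "t \<notin> e" "e \<in> E" "\<not> e \<subseteq> AA E s t" using e unfolding Irr_def by auto
  have st: "s \<noteq> t" using tt unfolding tt_graph_def by simp
  have finE: "finite E" using tt_finite[OF tt] .
  define E' where "E' = insert {x,y} (E - {e})"
  have tt': "tt_graph V E' s t" unfolding E'_def
    by (rule tt_ins[OF tt_sub[OF tt] xf(3) yf(3) xy(1)]) auto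
  have "card (E - {e}) = m - 1" using cE es(3) finE by simp
  hence cE': "card E' = m" unfolding E'_def using xy(2) finE m5 by simp
  have same: "z \<in> E' \<longleftrightarrow> z \<in> E" if "s \<in> z \<or> t \<in> z" for z
    using that es xf yf unfolding E'_def by auto
  note TWs = TW_same[OF tw same]
  have "Irr E' s t \<subseteq> Irr E s t - {e}"
  proof
    fix z assume "z \<in> Irr E' s t"
    hence z: "z \<in> E'" "s \<notin> z" "t \<notin> z" "\<not> z \<subseteq> AA E s t" unfolding Irr_def using TWs(2) by auto
    have "{x,y} \<subseteq> AA E s t" using x y by blast
    hence "z \<noteq> {x,y}" using z(4) by blast
    hence "z \<in> E - {e}" using z(1) unfolding E'_def by blast
    thus "z \<in> Irr E s t - {e}" using z unfolding Irr_def by blast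
  qed
  hence "Irr E' s t \<subset> Irr E s t" using e by blast
  hence cI: "card (Irr E' s t) < card (Irr E s t)"
    using psubset_card_mono[OF fin_Irr[OF tt]] by blast
  define \<phi> where "\<phi> z = (if z = e then {x,y} else z)" for z
  have inj: "inj_on \<phi> E" unfolding inj_on_def \<phi>_def using xy(2) by auto
  have im: "\<phi> ` E \<subseteq> E'" unfolding \<phi>_def E'_def by auto
  have pres: "W (\<phi> ` F) s t" if "F \<subseteq> E" "W F s t" for F
  proof -
    have "W (F - {e}) s t" using irr_W[OF that(1) tw e that(2)] .
    moreover have "F - {e} \<subseteq> \<phi> ` F" unfolding \<phi>_def by force
    ultimately show ?thesis by (rule W_mono)
  qed
  define F1 where "F1 = {{s,x}, e, {y,t}}"
  have F1E: "F1 \<subseteq> E" unfolding F1_def using xf yf es by auto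
  have d: "{s,x} \<noteq> e" "{y,t} \<noteq> e" using es by auto
  have "F1 - {e} = {{s,x},{y,t}}" unfolding F1_def using d by auto
  hence nW: "\<not> W F1 s t" using irr_W[OF F1E tw e] notW2[OF xy(1) xf(1,2) yf(1,2) st] by auto
  have "\<phi> ` F1 = {{s,x},{x,y},{y,t}}" unfolding F1_def \<phi>_def using d by auto
  hence W1: "W (\<phi> ` F1) s t" using W3[of s x y t] by simp
  have "{s,x} \<noteq> {y,t}" using xf yf st by (auto simp: doubleton_eq_iff)
  hence c3: "card F1 = 3" unfolding F1_def using d by auto
  have fin': "finite E'" using tt_finite[OF tt'] .
  from image_move[OF fin' inj im pres F1E nW W1] c3 m5
  have "(\<forall>i. Nw E s t i \<le> Nw E' s t i) \<and> (\<exists>j\<in>{1..m}. Nw E s t j < Nw E' s t j)" by force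
  thus ?thesis unfolding good_def using tt' TWs(1) cE' cI by blast
qed


lemma construct2:
  assumes tt: "tt_graph V E s t" and tw: "TW E s t" and cE: "card E = m"
    and e: "e \<in> Irr E s t" and f: "f \<in> E" "f \<noteq> e" "s \<notin> f" "t \<notin> f"
    and w: "w \<in> V" "w \<noteq> s" "w \<noteq> t" "{s,w} \<notin> E" "{t,w} \<notin> E"
    and E'_def: "E' = insert {s,w} (insert {t,w} (E - {e,f}))"
  shows "tt_graph V E' s t" "TW E' s t" "card E' = m" "card (Irr E' s t) < card (Irr E s t)"
    "finite E'" "AA E' s t = insert w (AA E s t)"
proof -
  have es: "s \<notin> e" "t \<notin> e" "e \<in> E" "\<not> e \<subseteq> AA E s t" using e unfolding Irr_def by auto
  have st: "s \<noteq> t" "s \<in> V" "t \<in> V" using tt unfolding tt_graph_def by simp_all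
  have finE: "finite E" using tt_finite[OF tt] .
  have tt0: "tt_graph V (E - {e,f}) s t" using tt_sub[OF tt] by blast
  have tt1: "tt_graph V (insert {t,w} (E - {e,f})) s t" using tt_ins[OF tt0 st(3) w(1)] w(3) by simp
  show tt': "tt_graph V E' s t" unfolding E'_def using tt_ins[OF tt1 st(2) w(1)] w(2) by simp
  show "finite E'" using tt_finite[OF tt'] .
  have "card (E - {e,f}) = card E - 2" using card_Diff_subset[of "{e,f}" E] finE es(3) f(1,2) by auto
  moreover have "card E \<ge> 2" using card_mono[OF finE, of "{e,f}"] es(3) f(1,2) by auto
  moreover have "{t,w} \<notin> E - {e,f}" using w by blast
  moreover have "{s,w} \<noteq> {t,w}" using st w by (auto simp: doubleton_eq_iff)
  moreover have "{s,w} \<notin> E - {e,f}" using w by blast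
  ultimately show "card E' = m" unfolding E'_def using finE cE by simp
  have mem: "{a,x} \<in> E' \<longleftrightarrow> {a,x} = {s,w} \<or> {a,x} = {t,w} \<or> {a,x} \<in> E" if "a = s \<or> a = t" for a x
  proof -
    have "{a,x} \<noteq> e" "{a,x} \<noteq> f" using that es f by auto
    thus ?thesis unfolding E'_def by blast
  qed
  have ms: "{s,x} \<in> E' \<longleftrightarrow> x = w \<or> {s,x} \<in> E" for x
    using mem[of s x] st w by (auto simp: doubleton_eq_iff)
  have mt: "{t,x} \<in> E' \<longleftrightarrow> x = w \<or> {t,x} \<in> E" for x
    using mem[of t x] st w by (auto simp: doubleton_eq_iff)
  show "TW E' s t" using tw ms mt w unfolding TW_def by metis
  show AA': "AA E' s t = insert w (AA E s t)" using ms w unfolding AA_def by auto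
  have "Irr E' s t \<subseteq> Irr E s t - {e}"
  proof
    fix z assume "z \<in> Irr E' s t"
    hence z: "z \<in> E'" "s \<notin> z" "t \<notin> z" "\<not> z \<subseteq> AA E' s t" unfolding Irr_def by auto
    have "z \<noteq> {s,w}" "z \<noteq> {t,w}" using z by auto
    hence "z \<in> E - {e,f}" using z(1) unfolding E'_def by blast
    moreover have "\<not> z \<subseteq> AA E s t" using z(4) AA' by blast
    ultimately show "z \<in> Irr E s t - {e}" using z unfolding Irr_def by blast
  qed
  hence "Irr E' s t \<subset> Irr E s t" using e by blast
  thus "card (Irr E' s t) < card (Irr E s t)"
    using psubset_card_mono[OF fin_Irr[OF tt]] by blast
qed

lemma get_w:
  assumes tt: "tt_graph V E s t" and tw: "TW E s t" and e: "e \<in> Irr E s t"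
  obtains w where "w \<in> e" "w \<in> V" "w \<noteq> s" "w \<noteq> t" "{s,w} \<notin> E" "{t,w} \<notin> E" "w \<notin> AA E s t"
proof -
  have es: "s \<notin> e" "t \<notin> e" "e \<in> E" "\<not> e \<subseteq> AA E s t" using e unfolding Irr_def by auto
  then obtain w where w: "w \<in> e" "w \<notin> AA E s t" by blast
  have "\<forall>e\<in>E. \<exists>u v. e = {u, v} \<and> u \<noteq> v \<and> u \<in> V \<and> v \<in> V" using tt unfolding tt_graph_def by simp
  then obtain a b where "e = {a,b} \<and> a \<in> V \<and> b \<in> V" using es(3) by meson
  hence wV: "w \<in> V" using w by auto
  have "w \<noteq> s" "w \<noteq> t" using w es by auto
  moreover have "{s,w} \<notin> E" using w \<open>w \<noteq> t\<close> unfolding AA_def by auto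
  moreover have "{t,w} \<notin> E" using calculation tw unfolding TW_def by blast
  ultimately show ?thesis using that w wV by blast
qed

lemma M2:
  assumes tt: "tt_graph V E s t" and tw: "TW E s t" and cE: "card E = m" and m5: "m \<ge> 5"
    and e: "e \<in> Irr E s t" and f: "f \<in> Irr E s t" "f \<noteq> e"
  shows "\<exists>E'. good V s t m E E'"
proof -
  obtain w where w: "w \<in> V" "w \<noteq> s" "w \<noteq> t" "{s,w} \<notin> E" "{t,w} \<notin> E"
    using get_w[OF tt tw e] by metis
  have fs: "f \<in> E" "s \<notin> f" "t \<notin> f" using f unfolding Irr_def by auto
  have es: "s \<notin> e" "t \<notin> e" "e \<in> E" using e unfolding Irr_def by auto
  have st: "s \<noteq> t" using tt unfolding tt_graph_def by simp
  define E' where "E' = insert {s,w} (insert {t,w} (E - {e,f}))"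
  note C = construct2[OF tt tw cE e fs(1) f(2) fs(2,3) w E'_def]
  define \<phi> where "\<phi> z = (if z = e then {s,w} else if z = f then {t,w} else z)" for z
  have swtw: "{s,w} \<noteq> {t,w}" using st w by (auto simp: doubleton_eq_iff)
  have inj: "inj_on \<phi> E" unfolding inj_on_def \<phi>_def using w swtw by auto
  have im: "\<phi> ` E \<subseteq> E'" unfolding \<phi>_def E'_def by auto
  have pres: "W (\<phi> ` F) s t" if "F \<subseteq> E" "W F s t" for F
  proof -
    have "W (F - {e}) s t" using irr_W[OF that(1) tw e that(2)] .
    hence "W (F - {e} - {f}) s t" using irr_W[OF _ tw f(1)] that(1) by blast
    moreover have "F - {e} - {f} \<subseteq> \<phi> ` F" unfolding \<phi>_def by force
    ultimately show ?thesis by (rule W_mono)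
  qed
  define F1 where "F1 = {e, f}"
  have F1E: "F1 \<subseteq> E" unfolding F1_def using es fs by auto
  have nW: "\<not> W F1 s t" unfolding F1_def by (rule notW_nos) (use es fs in auto)
  have "\<phi> ` F1 = {{s,w},{w,t}}" unfolding F1_def \<phi>_def using f(2) by (auto simp: insert_commute)
  hence W1: "W (\<phi> ` F1) s t" using W2[of s w t] by simp
  have c2: "card F1 = 2" unfolding F1_def using f(2) by auto
  from image_move[OF C(5) inj im pres F1E nW W1] c2 m5
  have "(\<forall>i. Nw E s t i \<le> Nw E' s t i) \<and> (\<exists>j\<in>{1..m}. Nw E s t j < Nw E' s t j)" by force
  thus ?thesis unfolding good_def using C by blast
qed


lemma M3:
  assumes tt: "tt_graph V E s t" and tw: "TW E s t" and cE: "card E = m" and m5: "m \<ge> 5"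
    and e: "e \<in> Irr E s t" and u: "u \<in> AA E s t" and v: "v \<in> AA E s t" and uv: "u \<noteq> v" "{u,v} \<in> E"
  shows "\<exists>E'. good V s t m E E'"
proof -
  obtain w where w: "w \<in> V" "w \<noteq> s" "w \<noteq> t" "{s,w} \<notin> E" "{t,w} \<notin> E" "w \<notin> AA E s t"
    using get_w[OF tt tw e] by metis
  note uf = AA_facts[OF tt tw u] and vf = AA_facts[OF tt tw v]
  have es: "s \<notin> e" "t \<notin> e" "e \<in> E" "\<not> e \<subseteq> AA E s t" using e unfolding Irr_def by auto
  have st: "s \<noteq> t" using tt unfolding tt_graph_def by simp
  define f where "f = {u,v}"
  have fs: "f \<in> E" "s \<notin> f" "t \<notin> f" "f \<noteq> e" using uv uf vf es u v unfolding f_def by auto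
  have uw: "u \<noteq> w" "v \<noteq> w" using u v w by auto
  define E' where "E' = insert {s,w} (insert {t,w} (E - {e,f}))"
  note C = construct2[OF tt tw cE e fs(1) fs(4) fs(2,3) w(1-5) E'_def]
  define \<phi> where "\<phi> z = (if z = e then {s,w} else if z = f then {t,w} else z)" for z
  have swtw: "{s,w} \<noteq> {t,w}" using st w by (auto simp: doubleton_eq_iff)
  have inj: "inj_on \<phi> E" unfolding inj_on_def \<phi>_def using w swtw by auto
  have im: "\<phi> ` E \<subseteq> E'" unfolding \<phi>_def E'_def by auto
  have finE: "finite E" using tt_finite[OF tt] .
  have Wsw: "W G s t" if "{s,w} \<in> G" "{t,w} \<in> G" for G
    using W_mono[OF W2[of s w t], of G] that by (auto simp: insert_commute)
  have sub0: "F - {e} - {f} \<subseteq> \<phi> ` F" for F unfolding \<phi>_def by force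
  define \<psi> where "\<psi> F = (if {s,u} \<in> F \<and> {v,t} \<in> F then insert {s,w} (insert {t,w} (F - {f,{s,u}}))
      else insert {s,w} (insert {t,w} (F - {f,{s,v}})))" for F
  define \<Phi> where "\<Phi> F = (if W (\<phi> ` F) s t then \<phi> ` F else \<psi> F)" for F
  define L where "L F \<longleftrightarrow> F \<subseteq> E \<and> W F s t \<and> \<not> W (\<phi> ` F) s t" for F
  have d1: "{s,u} \<noteq> f" "{s,v} \<noteq> f" "{u,t} \<noteq> f" "{v,t} \<noteq> f" using fs by auto
  have d2: "{s,u} \<noteq> {v,t}" "{s,v} \<noteq> {u,t}" "{s,u} \<noteq> {s,w}" "{s,u} \<noteq> {t,w}" "{s,v} \<noteq> {s,w}" "{s,v} \<noteq> {t,w}"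
     "{v,t} \<noteq> {s,w}" "{v,t} \<noteq> {t,w}" "{u,t} \<noteq> {s,w}" "{u,t} \<noteq> {t,w}"
    using uf vf st w uw by (auto simp: doubleton_eq_iff)
  have Lf: "f \<in> F \<and> e \<notin> F \<and> \<not> W (F - {f}) s t \<and>
     (({s,u} \<in> F \<and> {v,t} \<in> F \<and> {u,t} \<notin> F) \<or> (\<not> ({s,u} \<in> F \<and> {v,t} \<in> F) \<and> {s,v} \<in> F \<and> {u,t} \<in> F \<and> {v,t} \<notin> F))"
    if LF: "L F" for F
  proof -
    have F: "F \<subseteq> E" "W F s t" "\<not> W (\<phi> ` F) s t" using LF unfolding L_def by auto
    have nWf: "\<not> W (F - {f}) s t"
    proof
      assume "W (F - {f}) s t"
      hence "W (F - {f} - {e}) s t" using irr_W[OF _ tw e] F(1) by blast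
      moreover have "F - {f} - {e} = F - {e} - {f}" by blast
      ultimately show False using W_mono[OF _ sub0] F(3) by metis
    qed
    have fF: "f \<in> F"
    proof (rule ccontr)
      assume "f \<notin> F"
      hence "F - {f} = F" by simp
      thus False using nWf F(2) by simp
    qed
    have eF: "e \<notin> F"
    proof
      assume "e \<in> F"
      hence "{s,w} \<in> \<phi> ` F" "{t,w} \<in> \<phi> ` F" using fF fs(4) unfolding \<phi>_def by force+
      thus False using Wsw F(3) by blast
    qed
    have c: "({s,u} \<in> F \<and> {v,t} \<in> F) \<or> ({s,v} \<in> F \<and> {u,t} \<in> F)"
      using W_uv[OF F(2) uf(1,2) vf(1,2)] nWf unfolding f_def by blast
    have n1: "{u,t} \<notin> F" if "{s,u} \<in> F"
    proof
      assume "{u,t} \<in> F"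
      hence "{{s,u},{u,t}} \<subseteq> F - {f}" using that d1 by blast
      thus False using W_mono[OF W2[of s u t]] nWf by blast
    qed
    have n2: "{v,t} \<notin> F" if "{s,v} \<in> F"
    proof
      assume "{v,t} \<in> F"
      hence "{{s,v},{v,t}} \<subseteq> F - {f}" using that d1 by blast
      thus False using W_mono[OF W2[of s v t]] nWf by blast
    qed
    show ?thesis using c n1 n2 fF eF nWf by blast
  qed
  define R where "R G = (if {v,t} \<in> G then insert f (insert {s,u} (G - {{s,w},{t,w}}))
      else insert f (insert {s,v} (G - {{s,w},{t,w}})))" for G
  have Rpsi: "R (\<psi> F) = F" if "L F" for F
  proof -
    note l = Lf[OF that]
    have FE: "F \<subseteq> E" using that unfolding L_def by blast
    have nsw: "{s,w} \<notin> F" "{t,w} \<notin> F" using FE w by auto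
    show ?thesis
    proof (cases "{s,u} \<in> F \<and> {v,t} \<in> F")
      case True
      hence p: "\<psi> F = insert {s,w} (insert {t,w} (F - {f,{s,u}}))" unfolding \<psi>_def by simp
      have "{v,t} \<in> \<psi> F" using True d1 d2 unfolding p by auto
      hence "R (\<psi> F) = insert f (insert {s,u} (\<psi> F - {{s,w},{t,w}}))" unfolding R_def by simp
      also have "\<psi> F - {{s,w},{t,w}} = F - {f,{s,u}}" unfolding p using nsw by auto
      finally show ?thesis using True l by auto
    next
      case False
      hence p: "\<psi> F = insert {s,w} (insert {t,w} (F - {f,{s,v}}))" unfolding \<psi>_def by (rule if_not_P)
      have "{v,t} \<notin> F" using False l by blast
      hence "{v,t} \<notin> \<psi> F" using d2(7,8) unfolding p by blast
      hence "R (\<psi> F) = insert f (insert {s,v} (\<psi> F - {{s,w},{t,w}}))" unfolding R_def by simp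
      also have "\<psi> F - {{s,w},{t,w}} = F - {f,{s,v}}" unfolding p using nsw by auto
      finally show ?thesis using False l by auto
    qed
  qed
  have psi_prop: "\<psi> F \<subseteq> E' \<and> W (\<psi> F) s t \<and> card (\<psi> F) = card F" if "L F" for F
  proof -
    note l = Lf[OF that]
    have FE: "F \<subseteq> E" using that unfolding L_def by blast
    have finF: "finite F" using finite_subset[OF FE finE] .
    have nsw: "{s,w} \<notin> F" "{t,w} \<notin> F" using FE w by auto
    obtain a where a: "a \<in> F" "a \<noteq> f" "\<psi> F = insert {s,w} (insert {t,w} (F - {f,a}))"
    proof (cases "{s,u} \<in> F \<and> {v,t} \<in> F")
      case True
      hence "\<psi> F = insert {s,w} (insert {t,w} (F - {f,{s,u}}))" unfolding \<psi>_def by simp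
      thus ?thesis using that[of "{s,u}"] True d1 by blast
    next
      case False
      hence "\<psi> F = insert {s,w} (insert {t,w} (F - {f,{s,v}}))" unfolding \<psi>_def by (rule if_not_P)
      thus ?thesis using that[of "{s,v}"] False l d1 by blast
    qed
    have "F - {f,a} \<subseteq> E - {e,f}" using FE l by auto
    hence sub: "\<psi> F \<subseteq> E'" unfolding a(3) E'_def by blast
    have W': "W (\<psi> F) s t" using Wsw unfolding a(3) by blast
    have c1: "card (F - {f,a}) = card F - 2" using card_Diff_subset[of "{f,a}" F] finF l a by auto
    have c2: "card F \<ge> 2" using card_mono[OF finF, of "{f,a}"] l a by auto
    have "card (\<psi> F) = card F" unfolding a(3) using c1 c2 nsw swtw finF by simp
    thus ?thesis using sub W' by blast
  qed
  have cross: False if L1: "L F1" and F2: "F2 \<subseteq> E" "W F2 s t" and eq: "\<phi> ` F2 = \<psi> F1" for F1 F2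
  proof -
    note l = Lf[OF L1]
    have "{s,w} \<in> \<phi> ` F2" unfolding eq \<psi>_def by simp
    then obtain z where z: "z \<in> F2" "\<phi> z = {s,w}" by blast
    have "z = e" using z F2(1) w swtw unfolding \<phi>_def by (auto split: if_splits)
    hence eF2: "e \<in> F2" using z by simp
    have W2e: "W (F2 - {e}) s t" using irr_W[OF F2(1) tw e F2(2)] .
    have memb: "y \<in> \<psi> F1" if "y \<in> F2" "y \<noteq> e" "y \<noteq> f" for y
    proof -
      have "\<phi> y = y" using that unfolding \<phi>_def by simp
      thus ?thesis using that eq by (metis imageI)
    qed
    have yE: "y \<noteq> {s,w} \<and> y \<noteq> {t,w}" if "y \<in> F2" for y using that F2(1) w by auto
    show False
    proof (cases "{s,u} \<in> F1 \<and> {v,t} \<in> F1")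
      case True
      hence p: "\<psi> F1 = insert {s,w} (insert {t,w} (F1 - {f,{s,u}}))" unfolding \<psi>_def by simp
      have "F2 - {e} \<subseteq> F1 - {{s,u}}"
      proof
        fix y assume y: "y \<in> F2 - {e}"
        show "y \<in> F1 - {{s,u}}"
        proof (cases "y = f")
          case True thus ?thesis using l d1 by auto
        next
          case False thus ?thesis using memb[of y] y yE[of y] unfolding p by auto
        qed
      qed
      hence W': "W (F1 - {{s,u}}) s t" using W_mono[OF W2e] by blast
      have nW1: "\<not> W (F1 - {f}) s t" using l by blast
      have nW2: "\<not> W (F1 - {{s,u}} - {{u,v}}) s t"
      proof
        assume "W (F1 - {{s,u}} - {{u,v}}) s t"
        hence "W (F1 - {f}) s t" unfolding f_def by (rule W_mono) blast
        thus False using nW1 by blast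
      qed
      have o: "{u,t} \<notin> F1" using True l by blast
      show False using W_uv[OF W' uf(1,2) vf(1,2)] nW2 o by blast
    next
      case False
      hence p: "\<psi> F1 = insert {s,w} (insert {t,w} (F1 - {f,{s,v}}))" unfolding \<psi>_def by (rule if_not_P)
      have "F2 - {e} \<subseteq> F1 - {{s,v}}"
      proof
        fix y assume y: "y \<in> F2 - {e}"
        show "y \<in> F1 - {{s,v}}"
        proof (cases "y = f")
          case True thus ?thesis using l d1 by auto
        next
          case False thus ?thesis using memb[of y] y yE[of y] unfolding p by auto
        qed
      qed
      hence W': "W (F1 - {{s,v}}) s t" using W_mono[OF W2e] by blast
      have nW1: "\<not> W (F1 - {f}) s t" using l by blast
      have nW2: "\<not> W (F1 - {{s,v}} - {{u,v}}) s t"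
      proof
        assume "W (F1 - {{s,v}} - {{u,v}}) s t"
        hence "W (F1 - {f}) s t" unfolding f_def by (rule W_mono) blast
        thus False using nW1 by blast
      qed
      have o: "{v,t} \<notin> F1" using False l by blast
      show False using W_uv[OF W' uf(1,2) vf(1,2)] nW2 o by blast
    qed
  qed
  have maps: "\<Phi> F \<subseteq> E' \<and> W (\<Phi> F) s t \<and> card (\<Phi> F) = card F" if "F \<subseteq> E" "W F s t" for F
  proof (cases "W (\<phi> ` F) s t")
    case True
    have "card (\<phi> ` F) = card F" using card_image[OF inj_on_subset[OF inj that(1)]] .
    thus ?thesis using True im that(1) unfolding \<Phi>_def by auto
  next
    case False
    hence "L F" using that unfolding L_def by blast
    thus ?thesis using psi_prop False unfolding \<Phi>_def by simp
  qed
  have injP: "inj_on \<Phi> {F. F \<subseteq> E \<and> W F s t}"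
  proof (rule inj_onI)
    fix F1 F2 assume F1: "F1 \<in> {F. F \<subseteq> E \<and> W F s t}" and F2: "F2 \<in> {F. F \<subseteq> E \<and> W F s t}"
      and eq: "\<Phi> F1 = \<Phi> F2"
    show "F1 = F2"
    proof (cases "W (\<phi> ` F1) s t"; cases "W (\<phi> ` F2) s t")
      assume "W (\<phi> ` F1) s t" "W (\<phi> ` F2) s t"
      hence "\<phi> ` F1 = \<phi> ` F2" using eq unfolding \<Phi>_def by simp
      thus ?thesis using inj_onD[OF inj_on_image_Pow[OF inj]] F1 F2 by blast
    next
      assume a: "W (\<phi> ` F1) s t" "\<not> W (\<phi> ` F2) s t"
      hence "\<phi> ` F1 = \<psi> F2" "L F2" using eq F2 unfolding \<Phi>_def L_def by auto
      thus ?thesis using cross F1 by blast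
    next
      assume a: "\<not> W (\<phi> ` F1) s t" "W (\<phi> ` F2) s t"
      hence "\<phi> ` F2 = \<psi> F1" "L F1" using eq F1 unfolding \<Phi>_def L_def by auto
      thus ?thesis using cross F2 by blast
    next
      assume a: "\<not> W (\<phi> ` F1) s t" "\<not> W (\<phi> ` F2) s t"
      hence "\<psi> F1 = \<psi> F2" "L F1" "L F2" using eq F1 F2 unfolding \<Phi>_def L_def by auto
      thus ?thesis using Rpsi by metis
    qed
  qed
  define F0 where "F0 = {{s,w},{t,w}}"
  have F0E: "F0 \<subseteq> E'" unfolding F0_def E'_def by blast
  have W0: "W F0 s t" unfolding F0_def using Wsw by blast
  have c0: "card F0 = 2" unfolding F0_def using swtw by simp
  have ne: "\<Phi> F \<noteq> F0" if "F \<subseteq> E" "W F s t" for F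
  proof
    assume eqF: "\<Phi> F = F0"
    show False
    proof (cases "W (\<phi> ` F) s t")
      case True
      hence i: "\<phi> ` F = F0" using eqF unfolding \<Phi>_def by simp
      have "F \<subseteq> {e,f}"
      proof
        fix z assume "z \<in> F"
        hence "\<phi> z \<in> F0" "z \<in> E" using i that by auto
        thus "z \<in> {e,f}" unfolding \<phi>_def F0_def using w by (auto split: if_splits)
      qed
      hence sub: "F - {e} \<subseteq> {f}" by blast
      have wfe: "W (F - {e}) s t" using irr_W[OF that(1) tw e that(2)] .
      have "W {f} s t" using W_mono[OF wfe sub] .
      thus False using notW_nos[of "{f}" s t] fs by auto
    next
      case False
      hence LF: "L F" and p: "\<psi> F = F0" using that eqF unfolding L_def \<Phi>_def by auto
      note l = Lf[OF LF]
      show False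
      proof (cases "{s,u} \<in> F \<and> {v,t} \<in> F")
        case True
        hence pp: "\<psi> F = insert {s,w} (insert {t,w} (F - {f,{s,u}}))" unfolding \<psi>_def by simp
        have "{v,t} \<in> \<psi> F" unfolding pp using True d1(4) d2(1) by blast
        hence "{v,t} \<in> F0" using p by simp
        thus False using d2(7,8) unfolding F0_def by simp
      next
        case False
        hence pp: "\<psi> F = insert {s,w} (insert {t,w} (F - {f,{s,v}}))" unfolding \<psi>_def by (rule if_not_P)
        have "{u,t} \<in> F" using False l by blast
        hence "{u,t} \<in> \<psi> F" unfolding pp using d1(3) d2(2) by blast
        hence "{u,t} \<in> F0" using p by simp
        thus False using d2(9,10) unfolding F0_def by simp
      qed
    qed
  qed
  have "\<forall>i. Nw E s t i \<le> Nw E' s t i" using stronger_inj[OF C(5) injP maps] by blast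
  moreover have "Nw E s t 2 < Nw E' s t 2" using stronger_strict[OF C(5) injP maps F0E W0 ne] c0 by simp
  ultimately have "(\<forall>i. Nw E s t i \<le> Nw E' s t i) \<and> (\<exists>j\<in>{1..m}. Nw E s t j < Nw E' s t j)"
    using m5 by force
  thus ?thesis unfolding good_def using C by blast
qed


lemma card4: "card {a,b,c,d::'b} \<le> 4"
proof -
  have "card {a,b,c,d} \<le> Suc (card {b,c,d})" by (rule card_insert_le_m1) auto
  moreover have "card {b,c,d} \<le> Suc (card {c,d})" by (rule card_insert_le_m1) auto
  moreover have "card {c,d} \<le> 2" by (simp add: card_insert_if)
  ultimately show ?thesis by linarith
qed

lemma step:
  assumes tt: "tt_graph V E s t" and tw: "TW E s t" and cE: "card E = m" and m5: "m \<ge> 5"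
    and ne: "Irr E s t \<noteq> {}"
  shows "\<exists>E'. good V s t m E E'"
proof -
  obtain e where e: "e \<in> Irr E s t" using ne by blast
  show ?thesis
  proof (cases "\<exists>x y. x \<in> AA E s t \<and> y \<in> AA E s t \<and> x \<noteq> y \<and> {x,y} \<notin> E")
    case True
    then obtain x y where "x \<in> AA E s t" "y \<in> AA E s t" "x \<noteq> y" "{x,y} \<notin> E" by blast
    thus ?thesis using M1[OF tt tw cE m5 e] by blast
  next
    case c1: False
    show ?thesis
    proof (cases "\<exists>f \<in> Irr E s t. f \<noteq> e")
      case True
      then obtain f where "f \<in> Irr E s t" "f \<noteq> e" by blast
      thus ?thesis using M2[OF tt tw cE m5 e] by blast
    next
      case c2: False
      show ?thesis
      proof (cases "\<exists>u v. u \<in> AA E s t \<and> v \<in> AA E s t \<and> u \<noteq> v")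
        case True
        then obtain u v where "u \<in> AA E s t" "v \<in> AA E s t" "u \<noteq> v" by blast
        moreover hence "{u,v} \<in> E" using c1 by blast
        ultimately show ?thesis using M3[OF tt tw cE m5 e] by blast
      next
        case c3: False
        obtain x where x: "AA E s t \<subseteq> {x}"
        proof (cases "AA E s t = {}")
          case True thus ?thesis using that by blast
        next
          case False
          then obtain x where "x \<in> AA E s t" by blast
          thus ?thesis using that c3 by blast
        qed
        have irr1: "Irr E s t \<subseteq> {e}" using c2 by blast
        have st: "s \<noteq> t" using tt unfolding tt_graph_def by simp
        have "E \<subseteq> {{s,t}, e, {s,x}, {t,x}}"
        proof
          fix z assume zE: "z \<in> E"
          have "\<forall>e\<in>E. \<exists>u v. e = {u, v} \<and> u \<noteq> v \<and> u \<in> V \<and> v \<in> V" using tt unfolding tt_graph_def by simp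
          then obtain a b where ab: "z = {a,b} \<and> a \<noteq> b" using zE by meson
          show "z \<in> {{s,t}, e, {s,x}, {t,x}}"
          proof (cases "s \<in> z")
            case True
            then obtain y where zy: "z = {s,y}" using ab by (auto simp: insert_commute)
            show ?thesis
            proof (cases "y = t")
              case True thus ?thesis using zy by simp
            next
              case False
              hence "y \<in> AA E s t" using zy zE unfolding AA_def by simp
              thus ?thesis using x zy by auto
            qed
          next
            case ns: False
            show ?thesis
            proof (cases "t \<in> z")
              case True
              then obtain y where zy: "z = {t,y}" using ab by (auto simp: insert_commute)
              have ys: "y \<noteq> s" using ns zy by auto
              have "y \<noteq> t" using zy ab by auto
              hence "{s,y} \<in> E" using tw ys zE zy unfolding TW_def by blast
              hence "y \<in> AA E s t" using \<open>y \<noteq> t\<close> unfolding AA_def by simp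
              thus ?thesis using x zy by auto
            next
              case nt: False
              show ?thesis
              proof (cases "z \<subseteq> AA E s t")
                case True
                hence "a \<in> AA E s t" "b \<in> AA E s t" using ab by auto
                thus ?thesis using c3 ab by blast
              next
                case False
                hence "z \<in> Irr E s t" using zE ns nt unfolding Irr_def by blast
                thus ?thesis using irr1 by blast
              qed
            qed
          qed
        qed
        hence "card E \<le> card {{s,t}, e, {s,x}, {t,x}}" by (rule card_mono[rotated]) simp
        hence "card E \<le> 4" using card4[of "{s,t}" e "{s,x}" "{t,x}"] by linarith
        thus ?thesis using cE m5 by simp
      qed
    qed
  qed
qed

lemma reach:
  assumes m5: "m \<ge> 5"
  shows "\<forall>E. tt_graph V E s t \<and> TW E s t \<and> card E = m \<and> card (Irr E s t) = k \<and> Irr E s t \<noteq> {} \<longrightarrow>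
    (\<exists>E'. tt_graph V E' s t \<and> TW E' s t \<and> card E' = m \<and> Irr E' s t = {}
      \<and> (\<forall>i. Nw E s t i \<le> Nw E' s t i) \<and> (\<exists>j\<in>{1..m}. Nw E s t j < Nw E' s t j))"
proof (induction k rule: less_induct)
  case (less k)
  show ?case
  proof (intro allI impI)
    fix E assume a: "tt_graph V E s t \<and> TW E s t \<and> card E = m \<and> card (Irr E s t) = k \<and> Irr E s t \<noteq> {}"
    have "\<exists>E1. good V s t m E E1" using step[of V E s t m] a m5 by blast
    then obtain E1 where g: "good V s t m E E1" by blast
    hence g1: "tt_graph V E1 s t" "TW E1 s t" "card E1 = m" "card (Irr E1 s t) < k"
      "\<forall>i. Nw E s t i \<le> Nw E1 s t i" "\<exists>j\<in>{1..m}. Nw E s t j < Nw E1 s t j"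
      using a unfolding good_def by auto
    show "\<exists>E'. tt_graph V E' s t \<and> TW E' s t \<and> card E' = m \<and> Irr E' s t = {}
      \<and> (\<forall>i. Nw E s t i \<le> Nw E' s t i) \<and> (\<exists>j\<in>{1..m}. Nw E s t j < Nw E' s t j)"
    proof (cases "Irr E1 s t = {}")
      case True thus ?thesis using g1 by blast
    next
      case False
      then obtain E2 where E2: "tt_graph V E2 s t" "TW E2 s t" "card E2 = m" "Irr E2 s t = {}"
        "\<forall>i. Nw E1 s t i \<le> Nw E2 s t i" "\<exists>j\<in>{1..m}. Nw E1 s t j < Nw E2 s t j"
        using less.IH[OF g1(4)] g1(1-3) by blast
      have "\<forall>i. Nw E s t i \<le> Nw E2 s t i" using g1(5) E2(5) order_trans by blast
      moreover have "\<exists>j\<in>{1..m}. Nw E s t j < Nw E2 s t j" using g1(6) E2(5) by (meson order_less_le_trans)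
      ultimately show ?thesis using E2(1-4) by blast
    qed
  qed
qed

theorem lemma9:
  fixes V :: "'a set" and E :: "'a set set" and s t :: 'a and n m :: nat
  assumes "n \<ge> 5" and "m \<ge> 5"
    and "tt_graph V E s t" and "card V = n" and "card E = m"
    and "true_twins V E s t"
    and "\<exists>e. irrelevant_edge 3 E s t e"
  shows "\<exists>E' s' t'. tt_graph V E' s' t' \<and> card E' = m \<and> true_twins V E' s' t'
           \<and> (\<forall>e. \<not> irrelevant_edge 3 E' s' t' e)
           \<and> stronger 3 m E' s' t' E s t"
proof -
  have tw: "TW E s t" using twin_TW[OF assms(3,6)] .
  obtain e where "irrelevant_edge 3 E s t e" using assms(7) by blast
  hence "e \<in> Irr E s t" using relevant[OF assms(3) tw] by blast
  hence "Irr E s t \<noteq> {}" by blast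
  then obtain E' where E': "tt_graph V E' s t" "TW E' s t" "card E' = m" "Irr E' s t = {}"
        "\<forall>i. Nw E s t i \<le> Nw E' s t i" "\<exists>j\<in>{1..m}. Nw E s t j < Nw E' s t j"
    using reach[OF assms(2), where k="card (Irr E s t)" and V=V and s=s and t=t] assms(3,5) tw by blast
  have tw': "true_twins V E' s t" using TW_twin[OF E'(1,2)] .
  have ni: "\<forall>e. \<not> irrelevant_edge 3 E' s t e" using relevant[OF E'(1,2)] E'(4) by blast
  have "stronger 3 m E' s t E s t"
    unfolding stronger_def N_Nw[OF E'(1)] N_Nw[OF assms(3)] using E'(5,6) by blast
  thus ?thesis using E'(1,3) tw' ni by blast
qed

end
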